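(* Let $N\ge 1$, $\epsilon=1/N$, $F>0$, and let $\phi:(0,\infty)\to\mathbb{R}$ be twice differentiable, with $\phi''_{kF}:=\phi''(kF)$. Suppose $\phi''_{2F}\le 0$, $\phi''_{3F}\le 0$ and $\phi''_{kF}=0$ for $k\ge 4$. Consider the third-nearest-neighbour atomistic model, for which $\mathbf y_F$ is called a stable equilibrium if $$\epsilon\sum_{\ell=-N+1}^{N}\Big(\phi''_F|u'_\ell|^2+\phi''_{2F}|u'_\ell+u'_{\ell+1}|^2+\phi''_{3F}|u'_\ell+u'_{\ell+1}+u'_{\ell+2}|^2\Big)>0\quad\text{for all }\mathbf u\in\mathcal U\setminus\{\mathbf 0\}.$$ Then there is a constant $\eta_F$ with $2\le\eta_F\le 6$, uniquely determined by the deformation gradient $F$, such that $\mathbf y_F$ is a stable equilibrium of the atomistic model if and only if $$A_F^{(3)}-\epsilon^2\mu_\epsilon^2\big(\phi''_{2F}+\eta_F\phi''_{3F}\big)>0,$$ where $A_F^{(3)}=\phi''_F+4\phi''_{2F}+9\phi''_{3F}$.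
   Context: $\mathcal{U}$ is the space of real sequences $\mathbf u=(u_\ell)_{\ell\in\mathbb{Z}}$ with $u_{\ell+2N}=u_\ell$ and $\sum_{\ell=-N+1}^{N}u_\ell=0$; $(\mathbf y_F)_\ell=F\epsilon\ell$. For a sequence $\mathbf v$, $v'_\ell=(v_\ell-v_{\ell-1})/\epsilon$ and $v''_\ell=(v'_\ell-v'_{\ell-1})/\epsilon$. $\|\mathbf v\|_{\ell^2_\epsilon}=(\epsilon\sum_{\ell=-N+1}^N v_\ell^2)^{1/2}$ for $2N$-periodic $\mathbf v$. $\mu_\epsilon:=\inf_{\Psi\in\mathcal U\setminus\{\mathbf 0\}}\|\Psi''\|_{\ell^2_\epsilon}/\|\Psi'\|_{\ell^2_\epsilon}$, which equals $2\sin(\pi\epsilon/2)/\epsilon$. *)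

theory Defs
  imports "HOL-Analysis.Analysis"
begin

definition Uspace :: "nat \<Rightarrow> (int \<Rightarrow> real) set" where
  "Uspace N = {u. (\<forall>l. u (l + 2 * int N) = u l) \<and>
                  (\<Sum>l = - int N + 1 .. int N. u l) = 0}"

definition dq :: "real \<Rightarrow> (int \<Rightarrow> real) \<Rightarrow> int \<Rightarrow> real" where
  "dq eps v l = (v l - v (l - 1)) / eps"

definition l2eps :: "nat \<Rightarrow> real \<Rightarrow> (int \<Rightarrow> real) \<Rightarrow> real" where
  "l2eps N eps v = sqrt (eps * (\<Sum>l = - int N + 1 .. int N. (v l)\<^sup>2))"

definition mu_eps :: "nat \<Rightarrow> real" where
  "mu_eps N = (let eps = 1 / real N in
     Inf {l2eps N eps (dq eps (dq eps \<Psi>)) / l2eps N eps (dq eps \<Psi>) | \<Psi>.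
            \<Psi> \<in> Uspace N \<and> \<Psi> \<noteq> (\<lambda>_. 0)})"

text \<open>Stability of y_F in the third-nearest-neighbour atomistic model;
  p1, p2, p3 stand for phi''(F), phi''(2F), phi''(3F).\<close>
definition stable3 :: "nat \<Rightarrow> real \<Rightarrow> real \<Rightarrow> real \<Rightarrow> bool" where
  "stable3 N p1 p2 p3 = (let eps = 1 / real N in
     \<forall>u \<in> Uspace N - {\<lambda>_. 0}.
       eps * (\<Sum>l = - int N + 1 .. int N.
          p1 * (dq eps u l)\<^sup>2
        + p2 * (dq eps u l + dq eps u (l + 1))\<^sup>2
        + p3 * (dq eps u l + dq eps u (l + 1) + dq eps u (l + 2))\<^sup>2) > 0)"

end

theory Submission
  imports Defs
begin


lemma sum_shift1:
  fixes f :: "int \<Rightarrow> real" and N :: nat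
  assumes per: "\<And>l. f (l + 2 * int N) = f l" and N: "N \<ge> 1"
  shows "(\<Sum>l = - int N + 1 .. int N. f (l + 1)) = (\<Sum>l = - int N + 1 .. int N. f l)"
proof -
  have "(\<Sum>l = - int N + 1 .. int N. f (l + 1)) = (\<Sum>l \<in> (\<lambda>l. l + 1) ` {- int N + 1 .. int N}. f l)"
    using sum.reindex[of "\<lambda>l. l + 1" "{- int N + 1 .. int N}" f, symmetric]
    by (simp add: inj_on_def o_def del: image_add_atLeastAtMost image_add_atLeastAtMost')
  also have "(\<lambda>l. l + 1) ` {- int N + 1 .. int N} = {- int N + 2 .. int N + 1}"
  proof (rule set_eqI, rule iffI)
    fix x assume "x \<in> {- int N + 2 .. int N + 1}"
    then show "x \<in> (\<lambda>l. l + 1) ` {- int N + 1 .. int N}" by (intro image_eqI[of _ _ "x - 1"]) auto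
  qed auto
  also have "{- int N + 2 .. int N + 1} = insert (int N + 1) {- int N + 2 .. int N}"
    using N by auto
  also have "(\<Sum>l \<in> insert (int N + 1) {- int N + 2 .. int N}. f l) = f (int N + 1) + (\<Sum>l = - int N + 2 .. int N. f l)"
    by (subst sum.insert) auto
  also have "f (int N + 1) = f (- int N + 1)" using per[of "- int N + 1"] by (simp add: algebra_simps)
  also have "{- int N + 1 .. int N} = insert (- int N + 1) {- int N + 2 .. int N}"
    using N by auto
  moreover have "(\<Sum>l \<in> insert (- int N + 1) {- int N + 2 .. int N}. f l) = f (- int N + 1) + (\<Sum>l = - int N + 2 .. int N. f l)"
    by (subst sum.insert) auto
  ultimately show ?thesis by simp
qed

definition PS :: "nat \<Rightarrow> (int \<Rightarrow> real) \<Rightarrow> real" where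
  "PS N f = (\<Sum>l = - int N + 1 .. int N. f l)"

lemma PS_shift1: "(\<And>l. f (l + 2 * int N) = f l) \<Longrightarrow> N \<ge> 1 \<Longrightarrow> PS N (\<lambda>l. f (l + 1)) = PS N f"
  unfolding PS_def by (rule sum_shift1)

lemma PS_shift2: "(\<And>l. f (l + 2 * int N) = f l) \<Longrightarrow> N \<ge> 1 \<Longrightarrow> PS N (\<lambda>l. f (l + 2)) = PS N f"
proof -
  assume p: "\<And>l. f (l + 2 * int N) = f l" and N: "N \<ge> 1"
  have p1: "f (l + 2 * int N + 1) = f (l + 1)" for l using p[of "l+1"] by (simp add: algebra_simps)
  have "PS N (\<lambda>l. f (l + 1 + 1)) = PS N (\<lambda>l. f (l + 1))" by (rule PS_shift1[of "\<lambda>l. f (l + 1)", OF p1 N])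
  then show ?thesis using PS_shift1[of f N, OF p N] by (simp add: add.assoc)
qed

lemma PS_shiftm: "(\<And>l. f (l + 2 * int N) = f l) \<Longrightarrow> N \<ge> 1 \<Longrightarrow> PS N (\<lambda>l. f (l - 1)) = PS N f"
proof -
  assume p: "\<And>l. f (l + 2 * int N) = f l" and N: "N \<ge> 1"
  have p1: "f (l + 2 * int N - 1) = f (l - 1)" for l using p[of "l-1"] by (simp add: algebra_simps)
  have "PS N (\<lambda>l. f (l + 1 - 1)) = PS N (\<lambda>l. f (l - 1))" by (rule PS_shift1[of "\<lambda>l. f (l - 1)", OF p1 N])
  then show ?thesis by simp
qed

lemma PS_add: "PS N (\<lambda>l. f l + g l) = PS N f + PS N g"
  unfolding PS_def by (simp add: sum.distrib)
lemma PS_diff: "PS N (\<lambda>l. f l - g l) = PS N f - PS N g"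
  unfolding PS_def by (simp add: sum_subtractf)
lemma PS_cmult: "PS N (\<lambda>l. c * f l) = c * PS N f"
  unfolding PS_def by (simp add: sum_distrib_left)
lemma PS_nonneg: "(\<And>l. f l \<ge> 0) \<Longrightarrow> PS N f \<ge> 0"
  unfolding PS_def by (simp add: sum_nonneg)

locale perseq =
  fixes N :: nat and a :: "int \<Rightarrow> real"
  assumes N: "N \<ge> 1" and per: "\<And>l. a (l + 2 * int N) = a l"
begin

definition "S = PS N (\<lambda>l. (a l)\<^sup>2)"
definition "C1 = PS N (\<lambda>l. a l * a (l + 1))"
definition "C2 = PS N (\<lambda>l. a l * a (l + 2))"

lemma perg: "(\<lambda>l. g (a l) (a (l + 1)) (a (l + 2)) (a (l - 1))) (l + 2 * int N) = (\<lambda>l. g (a l) (a (l + 1)) (a (l + 2)) (a (l - 1))) l"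
  using per[of "l+1"] per[of "l+2"] per[of "l - 1"] per[of l] by (simp add: algebra_simps)

lemma S1: "PS N (\<lambda>l. (a (l + 1))\<^sup>2) = S"
  unfolding S_def using PS_shift1[of "\<lambda>l. (a l)\<^sup>2" N] per N by simp
lemma S2: "PS N (\<lambda>l. (a (l + 2))\<^sup>2) = S"
  unfolding S_def using PS_shift2[of "\<lambda>l. (a l)\<^sup>2" N] per N by simp
lemma Sm: "PS N (\<lambda>l. (a (l - 1))\<^sup>2) = S"
  unfolding S_def using PS_shiftm[of "\<lambda>l. (a l)\<^sup>2" N] per N by simp
lemma C1s: "PS N (\<lambda>l. a (l + 1) * a (l + 2)) = C1"
proof -
  have p: "a (l + 2 * int N) * a (l + 2 * int N + 1) = a l * a (l + 1)" for l
    using per[of l] per[of "l+1"] by (simp add: algebra_simps)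
  show ?thesis unfolding C1_def using PS_shift1[of "\<lambda>l. a l * a (l + 1)" N, OF p N] by (simp add: add.assoc)
qed
lemma C1m: "PS N (\<lambda>l. a l * a (l - 1)) = C1"
proof -
  have p: "a (l + 2 * int N) * a (l + 2 * int N + 1) = a l * a (l + 1)" for l
    using per[of l] per[of "l+1"] by (simp add: algebra_simps)
  show ?thesis unfolding C1_def using PS_shiftm[of "\<lambda>l. a l * a (l + 1)" N, OF p N] by (simp add: mult.commute)
qed

lemma energy: "PS N (\<lambda>l. p1 * (a l)\<^sup>2 + p2 * (a l + a (l + 1))\<^sup>2 + p3 * (a l + a (l + 1) + a (l + 2))\<^sup>2)
   = p1 * S + p2 * (2 * S + 2 * C1) + p3 * (3 * S + 4 * C1 + 2 * C2)"
proof -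
  have "PS N (\<lambda>l. p1 * (a l)\<^sup>2 + p2 * (a l + a (l + 1))\<^sup>2 + p3 * (a l + a (l + 1) + a (l + 2))\<^sup>2)
    = PS N (\<lambda>l. (p1 + p2 + p3) * (a l)\<^sup>2 + (p2 + p3) * (a (l + 1))\<^sup>2 + p3 * (a (l+2))\<^sup>2
        + (2 * p2 + 2 * p3) * (a l * a (l + 1)) + (2 * p3) * (a (l + 1) * a (l + 2)) + (2 * p3) * (a l * a (l + 2)))"
    unfolding PS_def by (rule sum.cong) (auto simp: power2_eq_square algebra_simps)
  also have "\<dots> = p1 * S + p2 * (2 * S + 2 * C1) + p3 * (3 * S + 4 * C1 + 2 * C2)"
    unfolding PS_add PS_cmult S1 S2 C1s by (simp add: S_def[symmetric] C1_def[symmetric] C2_def[symmetric] algebra_simps)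
  finally show ?thesis .
qed

lemma Dform: "PS N (\<lambda>l. (a l - a (l - 1))\<^sup>2) = 2 * S - 2 * C1"
proof -
  have "PS N (\<lambda>l. (a l - a (l - 1))\<^sup>2) = PS N (\<lambda>l. (a l)\<^sup>2 + (a (l - 1))\<^sup>2 - 2 * (a l * a (l - 1)))"
    unfolding PS_def by (rule sum.cong) (auto simp: power2_eq_square algebra_simps)
  also have "\<dots> = 2 * S - 2 * C1"
    unfolding PS_add PS_diff PS_cmult Sm C1m by (simp add: S_def[symmetric])
  finally show ?thesis .
qed

lemma D2nonneg: "6 * S - 8 * C1 + 2 * C2 \<ge> 0"
proof -
  have "PS N (\<lambda>l. (a (l + 2) - 2 * a (l + 1) + a l)\<^sup>2) = PS N (\<lambda>l. (a l)\<^sup>2 + 4 * (a (l + 1))\<^sup>2 + (a (l+2))\<^sup>2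
        - 4 * (a l * a (l + 1)) - 4 * (a (l + 1) * a (l + 2)) + 2 * (a l * a (l + 2)))"
    unfolding PS_def by (rule sum.cong) (auto simp: power2_eq_square algebra_simps)
  also have "\<dots> = 6 * S - 8 * C1 + 2 * C2"
    unfolding PS_add PS_diff PS_cmult S1 S2 C1s by (simp add: S_def[symmetric] C1_def[symmetric] C2_def[symmetric] algebra_simps)
  finally show ?thesis using PS_nonneg[of "\<lambda>l. (a (l + 2) - 2 * a (l + 1) + a l)\<^sup>2" N] by simp
qed

lemma C2bound: "2 * S - 2 * C2 \<ge> 0"
proof -
  have "PS N (\<lambda>l. (a l - a (l + 2))\<^sup>2) = PS N (\<lambda>l. (a l)\<^sup>2 + (a (l+2))\<^sup>2 - 2 * (a l * a (l + 2)))"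
    unfolding PS_def by (rule sum.cong) (auto simp: power2_eq_square algebra_simps)
  also have "\<dots> = 2 * S - 2 * C2"
    unfolding PS_add PS_diff PS_cmult S2 by (simp add: S_def[symmetric] C2_def[symmetric] algebra_simps)
  finally show ?thesis using PS_nonneg[of "\<lambda>l. (a l - a (l + 2))\<^sup>2" N] by simp
qed

end


lemma compact_box: "compact {\<Psi>::int \<Rightarrow> real. \<forall>l. \<Psi> l \<in> {-1..1}}"
proof -
  have "compactin (product_topology (\<lambda>_. euclidean) UNIV) (PiE UNIV (\<lambda>_::int. {-1..1::real}))"
    by (simp add: compactin_PiE)
  then have "compact (PiE UNIV (\<lambda>_::int. {-1..1::real}))"
    by (simp add: euclidean_product_topology)
  moreover have "PiE UNIV (\<lambda>_::int. {-1..1::real}) = {\<Psi>::int \<Rightarrow> real. \<forall>l. \<Psi> l \<in> {-1..1}}"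
    by (auto simp: PiE_def Pi_def)
  ultimately show ?thesis by simp
qed

lemma cont_coord: "continuous_on UNIV (\<lambda>x::int \<Rightarrow> real. x i)"
  by simp


definition SS :: "nat \<Rightarrow> (int \<Rightarrow> real) \<Rightarrow> real" where
  "SS N \<Psi> = PS N (\<lambda>l. (dq (1 / real N) \<Psi> l)\<^sup>2)"
definition DD :: "nat \<Rightarrow> (int \<Rightarrow> real) \<Rightarrow> real" where
  "DD N \<Psi> = PS N (\<lambda>l. (dq (1 / real N) \<Psi> l - dq (1 / real N) \<Psi> (l - 1))\<^sup>2)"
definition gq :: "nat \<Rightarrow> (int \<Rightarrow> real) \<Rightarrow> real" where
  "gq N \<Psi> = DD N \<Psi> / SS N \<Psi>"

lemma per_mult:
  assumes per: "\<And>l. \<Psi> (l + 2 * int N) = \<Psi> l"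
  shows "\<Psi> (j + int n * (2 * int N)) = \<Psi> j"
proof (induction n)
  case 0 then show ?case by simp
next
  case (Suc n)
  have "\<Psi> (j + int (Suc n) * (2 * int N)) = \<Psi> (j + int n * (2 * int N) + 2 * int N)"
    by (simp add: algebra_simps)
  also have "\<dots> = \<Psi> (j + int n * (2 * int N))" by (rule per)
  finally show ?case using Suc by simp
qed

lemma per_red:
  assumes per: "\<And>l. \<Psi> (l + 2 * int N) = \<Psi> l" and N: "N \<ge> 1"
  shows "\<exists>j \<in> {- int N + 1 .. int N}. \<Psi> l = \<Psi> j"
proof -
  define k where "k = (l + int N - 1) div (2 * int N)"
  define j where "j = (l + int N - 1) mod (2 * int N) - int N + 1"
  have pos: "2 * int N > 0" using N by simp
  have jP: "j \<in> {- int N + 1 .. int N}"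
    using pos_mod_bound[OF pos, of "l + int N - 1"] pos_mod_sign[OF pos, of "l + int N - 1"]
    unfolding j_def by auto
  have lj: "l = j + k * (2 * int N)"
    unfolding j_def k_def using div_mult_mod_eq[of "l + int N - 1" "2 * int N"] by (simp add: algebra_simps)
  show ?thesis
  proof (cases "k \<ge> 0")
    case True
    then have "\<Psi> l = \<Psi> j" using per_mult[of \<Psi> N j "nat k", OF per] lj by simp
    then show ?thesis using jP by blast
  next
    case False
    have "\<Psi> (l + int (nat (-k)) * (2 * int N)) = \<Psi> l" by (rule per_mult[of \<Psi> N, OF per])
    moreover have "l + int (nat (-k)) * (2 * int N) = j" using False lj by (simp add: algebra_simps)
    ultimately have "\<Psi> l = \<Psi> j" by simp
    then show ?thesis using jP by blast
  qed
qed

lemma SS_pos: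
  assumes U: "\<Psi> \<in> Uspace N" and nz: "\<Psi> \<noteq> (\<lambda>_. 0)" and N: "N \<ge> 1"
  shows "SS N \<Psi> > 0"
proof (rule ccontr)
  assume "\<not> SS N \<Psi> > 0"
  moreover have "SS N \<Psi> \<ge> 0" unfolding SS_def by (rule PS_nonneg) simp
  ultimately have "SS N \<Psi> = 0" by simp
  then have z: "\<forall>l \<in> {- int N + 1 .. int N}. (dq (1 / real N) \<Psi> l)\<^sup>2 = 0"
    unfolding SS_def PS_def by (subst (asm) sum_nonneg_eq_0_iff) auto
  have step: "\<Psi> l = \<Psi> (l - 1)" if "l \<in> {- int N + 1 .. int N}" for l
    using z that N by (auto simp: dq_def)
  have const: "\<Psi> (- int N + int n) = \<Psi> (- int N)" if "n \<le> 2 * N" for n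
    using that
  proof (induction n)
    case 0 then show ?case by simp
  next
    case (Suc n)
    have "\<Psi> (- int N + int (Suc n)) = \<Psi> (- int N + int (Suc n) - 1)"
      by (rule step) (use Suc.prems in auto)
    then show ?case using Suc by simp
  qed
  have constP: "\<Psi> l = \<Psi> (- int N)" if "l \<in> {- int N + 1 .. int N}" for l
    using const[of "nat (l + int N)"] that by auto
  have "PS N \<Psi> = 0" using U unfolding Uspace_def PS_def by simp
  moreover have "PS N \<Psi> = (\<Sum>l = - int N + 1 .. int N. \<Psi> (- int N))"
    unfolding PS_def by (rule sum.cong) (auto simp: constP)
  moreover have "card {- int N + 1 .. int N} = 2 * N" by simp
  ultimately have "real (2 * N) * \<Psi> (- int N) = 0" by simp
  then have c0: "\<Psi> (- int N) = 0" using N by simp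
  have per: "\<And>l. \<Psi> (l + 2 * int N) = \<Psi> l" using U unfolding Uspace_def by simp
  have "\<Psi> l = 0" for l
    using per_red[of \<Psi> N l, OF per N] constP c0 by auto
  then show False using nz by auto
qed

lemma cont_dq: "continuous_on UNIV (\<lambda>\<Psi>::int \<Rightarrow> real. dq e \<Psi> l)"
  unfolding dq_def divide_inverse by (intro continuous_intros cont_coord)

lemma cont_SS: "continuous_on UNIV (SS N)"
proof -
  have "continuous_on UNIV (\<lambda>\<Psi>. \<Sum>l = - int N + 1 .. int N. (dq (1 / real N) \<Psi> l)\<^sup>2)"
    by (intro continuous_intros cont_dq)
  then show ?thesis unfolding SS_def PS_def by (simp add: fun_eq_iff[symmetric])
qed

lemma cont_DD: "continuous_on UNIV (DD N)"
proof -
  have "continuous_on UNIV (\<lambda>\<Psi>. \<Sum>l = - int N + 1 .. int N. (dq (1 / real N) \<Psi> l - dq (1 / real N) \<Psi> (l - 1))\<^sup>2)"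
    by (intro continuous_intros cont_dq)
  then show ?thesis unfolding DD_def PS_def by (simp add: fun_eq_iff[symmetric])
qed


lemma Uspace_closed: "closed (Uspace N)"
proof -
  have "Uspace N = {\<Psi>. \<forall>l. \<Psi> (l + 2 * int N) = \<Psi> l} \<inter> {\<Psi>. (\<Sum>l = - int N + 1 .. int N. \<Psi> l) = 0}"
    unfolding Uspace_def by auto
  moreover have "closed {\<Psi>::int\<Rightarrow>real. \<forall>l. \<Psi> (l + 2 * int N) = \<Psi> l}"
    by (intro closed_Collect_all closed_Collect_eq cont_coord)
  moreover have "closed {\<Psi>::int\<Rightarrow>real. (\<Sum>l = - int N + 1 .. int N. \<Psi> l) = 0}"
    by (intro closed_Collect_eq continuous_intros cont_coord)
  ultimately show ?thesis by auto
qed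

lemma dq_scale: "dq e (\<lambda>l. \<Psi> l / M) l = dq e \<Psi> l / M"
  unfolding dq_def by (simp add: diff_divide_distrib[symmetric] divide_divide_eq_left mult.commute)

lemma gq_scale:
  assumes "M \<noteq> 0"
  shows "gq N (\<lambda>l. \<Psi> l / M) = gq N \<Psi>"
proof -
  have "SS N (\<lambda>l. \<Psi> l / M) = (1 / M\<^sup>2) * SS N \<Psi>"
    unfolding SS_def dq_scale PS_cmult[symmetric] by (simp add: power_divide)
  moreover have "DD N (\<lambda>l. \<Psi> l / M) = (1 / M\<^sup>2) * DD N \<Psi>"
    unfolding DD_def dq_scale PS_cmult[symmetric]
    by (rule arg_cong[where f="PS N"]) (simp add: fun_eq_iff power_divide diff_divide_distrib[symmetric])
  ultimately show ?thesis unfolding gq_def using assms by simp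
qed

lemma gq_min:
  assumes N: "N \<ge> 1"
  shows "\<exists>\<Psi>0 \<in> Uspace N - {\<lambda>_. 0}. \<forall>\<Psi> \<in> Uspace N - {\<lambda>_. 0}. gq N \<Psi>0 \<le> gq N \<Psi>"
proof -
  define P where "P = {- int N + 1 .. int N}"
  define K where "K = Uspace N \<inter> {\<Psi>::int \<Rightarrow> real. \<forall>l. \<Psi> l \<in> {-1..1}} \<inter> (\<Union>l\<in>P. {\<Psi>. \<bar>\<Psi> l\<bar> = 1})"
  have cl: "closed (\<Union>l\<in>P. {\<Psi>::int \<Rightarrow> real. \<bar>\<Psi> l\<bar> = 1})"
    unfolding P_def by (intro closed_UN finite_atLeastAtMost_int ballI closed_Collect_eq continuous_intros cont_coord)
  have "compact ({\<Psi>::int \<Rightarrow> real. \<forall>l. \<Psi> l \<in> {-1..1}} \<inter> (Uspace N \<inter> (\<Union>l\<in>P. {\<Psi>. \<bar>\<Psi> l\<bar> = 1})))"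
    by (intro compact_Int_closed compact_box closed_Int Uspace_closed cl)
  then have cK: "compact K" unfolding K_def by (simp add: Int_ac)
  have KU: "\<Psi> \<in> Uspace N - {\<lambda>_. 0}" if "\<Psi> \<in> K" for \<Psi>
    using that unfolding K_def by (auto simp: fun_eq_iff) (metis abs_zero zero_neq_one)
  define alt :: "int \<Rightarrow> real" where "alt = (\<lambda>l. if even l then 1 else -1)"
  have aper: "alt (l + 2 * int N) = alt l" for l unfolding alt_def by simp
  have "PS N (\<lambda>l. alt (l + 1)) = PS N alt" by (rule PS_shift1[of alt N, OF aper N])
  moreover have "(\<lambda>l. alt (l + 1)) = (\<lambda>l. (-1) * alt l)" unfolding alt_def by auto
  ultimately have "(-1) * PS N alt = PS N alt" by (metis PS_cmult)
  then have "PS N alt = 0" by simp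
  then have "alt \<in> K" unfolding K_def Uspace_def P_def PS_def
    using aper N by (auto simp: alt_def intro!: bexI[of _ "int N"])
  then have Kne: "K \<noteq> {}" by auto
  have "continuous_on K (\<lambda>\<Psi>. DD N \<Psi> / SS N \<Psi>)"
    using KU SS_pos N
    by (intro continuous_intros continuous_on_subset[OF cont_DD] continuous_on_subset[OF cont_SS])
       (auto, fastforce)
  then obtain \<Psi>0 where P0: "\<Psi>0 \<in> K" and min: "\<forall>\<Psi>\<in>K. gq N \<Psi>0 \<le> gq N \<Psi>"
    using continuous_attains_inf[OF cK Kne] unfolding gq_def by blast
  have "gq N \<Psi>0 \<le> gq N \<Psi>" if \<Psi>: "\<Psi> \<in> Uspace N - {\<lambda>_. 0}" for \<Psi>
  proof -
    have per: "\<And>l. \<Psi> (l + 2 * int N) = \<Psi> l" and s0: "PS N \<Psi> = 0"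
      using \<Psi> unfolding Uspace_def PS_def by auto
    define M where "M = Max ((\<lambda>l. \<bar>\<Psi> l\<bar>) ` P)"
    have fP: "finite P" and neP: "P \<noteq> {}" unfolding P_def using N by auto
    have Mge: "\<bar>\<Psi> l\<bar> \<le> M" for l
    proof -
      obtain j where "j \<in> P" "\<Psi> l = \<Psi> j" using per_red[of \<Psi> N l, OF per N] unfolding P_def by blast
      then show ?thesis unfolding M_def using fP by (auto intro: Max_ge)
    qed
    obtain l0 where "\<Psi> l0 \<noteq> 0" using \<Psi> by (auto simp: fun_eq_iff)
    then have Mpos: "M > 0" using Mge[of l0] by linarith
    obtain lm where lm: "lm \<in> P" "\<bar>\<Psi> lm\<bar> = M"
    proof -
      have "M \<in> (\<lambda>l. \<bar>\<Psi> l\<bar>) ` P" unfolding M_def using fP neP by (intro Max_in) auto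
      then show ?thesis using that by blast
    qed
    have "(\<lambda>l. \<Psi> l / M) \<in> K"
      unfolding K_def
    proof (intro IntI)
      show "(\<lambda>l. \<Psi> l / M) \<in> Uspace N"
        using per s0 unfolding Uspace_def PS_def by (simp add: sum_divide_distrib[symmetric])
      show "(\<lambda>l. \<Psi> l / M) \<in> {\<Psi>::int \<Rightarrow> real. \<forall>l. \<Psi> l \<in> {-1..1}}"
        using Mge Mpos by (auto simp: abs_le_iff divide_le_eq le_divide_eq) (smt (verit) Mge)
      show "(\<lambda>l. \<Psi> l / M) \<in> (\<Union>l\<in>P. {\<Psi>. \<bar>\<Psi> l\<bar> = 1})"
        using lm Mpos by auto
    qed
    then have "gq N \<Psi>0 \<le> gq N (\<lambda>l. \<Psi> l / M)" using min by blast
    then show ?thesis using gq_scale[of M N \<Psi>] Mpos by simp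
  qed
  then show ?thesis using KU[OF P0] by blast
qed


lemma ratio_eq:
  assumes N: "N \<ge> 1" and pos: "SS N \<Psi> > 0"
  shows "l2eps N (1 / real N) (dq (1 / real N) (dq (1 / real N) \<Psi>)) / l2eps N (1 / real N) (dq (1 / real N) \<Psi>)
         = real N * sqrt (gq N \<Psi>)"
proof -
  define e where "e = 1 / real N"
  have Np: "real N > 0" using N by simp
  have "(\<Sum>l = - int N + 1 .. int N. (dq e (dq e \<Psi>) l)\<^sup>2)
      = PS N (\<lambda>l. (real N)\<^sup>2 * (dq e \<Psi> l - dq e \<Psi> (l - 1))\<^sup>2)"
  proof -
    have d: "dq e (dq e \<Psi>) l = real N * (dq e \<Psi> l - dq e \<Psi> (l - 1))" for l
      unfolding dq_def[of e "dq e \<Psi>"] by (simp add: e_def)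
    show ?thesis unfolding PS_def by (rule sum.cong) (auto simp: d power_mult_distrib)
  qed
  then have 1: "e * (\<Sum>l = - int N + 1 .. int N. (dq e (dq e \<Psi>) l)\<^sup>2) = real N * DD N \<Psi>"
    unfolding PS_cmult DD_def e_def[symmetric] using Np by (simp add: e_def power2_eq_square)
  have 2: "e * (\<Sum>l = - int N + 1 .. int N. (dq e \<Psi> l)\<^sup>2) = SS N \<Psi> / real N"
    unfolding SS_def PS_def e_def by simp
  have "l2eps N e (dq e (dq e \<Psi>)) / l2eps N e (dq e \<Psi>) = sqrt (real N * DD N \<Psi>) / sqrt (SS N \<Psi> / real N)"
    unfolding l2eps_def 1 2 by simp
  also have "\<dots> = sqrt (real N * DD N \<Psi> / (SS N \<Psi> / real N))" by (simp only: real_sqrt_divide)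
  also have "real N * DD N \<Psi> / (SS N \<Psi> / real N) = (real N)\<^sup>2 * gq N \<Psi>"
    unfolding gq_def using Np pos by (simp add: field_simps power2_eq_square)
  also have "sqrt \<dots> = real N * sqrt (gq N \<Psi>)" by (simp add: real_sqrt_mult)
  finally show ?thesis unfolding e_def .
qed

lemma mu_char:
  assumes N: "N \<ge> 1"
  shows "\<exists>\<Psi>0 \<in> Uspace N - {\<lambda>_. 0}. (\<forall>\<Psi> \<in> Uspace N - {\<lambda>_. 0}. gq N \<Psi>0 \<le> gq N \<Psi>)
           \<and> mu_eps N = real N * sqrt (gq N \<Psi>0)"
proof -
  obtain \<Psi>0 where P0: "\<Psi>0 \<in> Uspace N - {\<lambda>_. 0}" and min: "\<forall>\<Psi> \<in> Uspace N - {\<lambda>_. 0}. gq N \<Psi>0 \<le> gq N \<Psi>"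
    using gq_min[OF N] by blast
  have r: "l2eps N (1 / real N) (dq (1 / real N) (dq (1 / real N) \<Psi>)) / l2eps N (1 / real N) (dq (1 / real N) \<Psi>)
         = real N * sqrt (gq N \<Psi>)" if "\<Psi> \<in> Uspace N - {\<lambda>_. 0}" for \<Psi>
    using that by (intro ratio_eq N SS_pos) auto
  have "mu_eps N = Inf {l2eps N (1 / real N) (dq (1 / real N) (dq (1 / real N) \<Psi>)) / l2eps N (1 / real N) (dq (1 / real N) \<Psi>) | \<Psi>.
            \<Psi> \<in> Uspace N \<and> \<Psi> \<noteq> (\<lambda>_. 0)}"
    unfolding mu_eps_def Let_def ..
  also have "{l2eps N (1 / real N) (dq (1 / real N) (dq (1 / real N) \<Psi>)) / l2eps N (1 / real N) (dq (1 / real N) \<Psi>) | \<Psi>.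
            \<Psi> \<in> Uspace N \<and> \<Psi> \<noteq> (\<lambda>_. 0)} = (\<lambda>\<Psi>. real N * sqrt (gq N \<Psi>)) ` (Uspace N - {\<lambda>_. 0})"
  proof (rule set_eqI, rule iffI)
    fix x assume "x \<in> (\<lambda>\<Psi>. real N * sqrt (gq N \<Psi>)) ` (Uspace N - {\<lambda>_. 0})"
    then obtain \<Psi> where "\<Psi> \<in> Uspace N - {\<lambda>_. 0}" "x = real N * sqrt (gq N \<Psi>)" by blast
    then show "x \<in> {l2eps N (1 / real N) (dq (1 / real N) (dq (1 / real N) \<Psi>)) / l2eps N (1 / real N) (dq (1 / real N) \<Psi>) | \<Psi>.
            \<Psi> \<in> Uspace N \<and> \<Psi> \<noteq> (\<lambda>_. 0)}" using r[of \<Psi>] by (auto intro!: exI[of _ \<Psi>])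
  qed (use r in auto)
  also have "Inf \<dots> = real N * sqrt (gq N \<Psi>0)"
  proof (rule cInf_eq_minimum)
    show "real N * sqrt (gq N \<Psi>0) \<in> (\<lambda>\<Psi>. real N * sqrt (gq N \<Psi>)) ` (Uspace N - {\<lambda>_. 0})" using P0 by blast
    fix x assume "x \<in> (\<lambda>\<Psi>. real N * sqrt (gq N \<Psi>)) ` (Uspace N - {\<lambda>_. 0})"
    then obtain \<Psi> where "\<Psi> \<in> Uspace N - {\<lambda>_. 0}" "x = real N * sqrt (gq N \<Psi>)" by blast
    then show "real N * sqrt (gq N \<Psi>0) \<le> x" using min by (auto intro: mult_left_mono)
  qed
  finally show ?thesis using P0 min by blast
qed


definition Eu :: "nat \<Rightarrow> real \<Rightarrow> real \<Rightarrow> real \<Rightarrow> (int \<Rightarrow> real) \<Rightarrow> real" where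
  "Eu N p1 p2 p3 u = (\<Sum>l = - int N + 1 .. int N.
          p1 * (dq (1 / real N) u l)\<^sup>2
        + p2 * (dq (1 / real N) u l + dq (1 / real N) u (l + 1))\<^sup>2
        + p3 * (dq (1 / real N) u l + dq (1 / real N) u (l + 1) + dq (1 / real N) u (l + 2))\<^sup>2)"

lemma stable3_Eu: "stable3 N p1 p2 p3 = (\<forall>u \<in> Uspace N - {\<lambda>_. 0}. 1 / real N * Eu N p1 p2 p3 u > 0)"
  unfolding stable3_def Let_def Eu_def ..

lemma per_u:
  assumes N: "N \<ge> 1" and U: "u \<in> Uspace N" and p3: "p3 \<le> 0"
  shows "Eu N p1 p2 p3 u \<le> (p1 + 4 * p2 + 9 * p3) * SS N u - (p2 + 6 * p3) * DD N u"
    and "Eu N p1 p2 p3 u \<ge> (p1 + 4 * p2 + 9 * p3) * SS N u - (p2 + 2 * p3) * DD N u"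
proof -
  define a where "a = dq (1 / real N) u"
  have peru: "\<And>l. u (l + 2 * int N) = u l" using U unfolding Uspace_def by auto
  have "perseq N a"
  proof
    show "N \<ge> 1" by (rule N)
    fix l show "a (l + 2 * int N) = a l"
      unfolding a_def dq_def using peru[of l] peru[of "l - 1"] by (simp add: algebra_simps)
  qed
  then interpret pa: perseq N a .
  have E: "Eu N p1 p2 p3 u = p1 * pa.S + p2 * (2 * pa.S + 2 * pa.C1) + p3 * (3 * pa.S + 4 * pa.C1 + 2 * pa.C2)"
    using pa.energy[of p1 p2 p3] unfolding Eu_def PS_def a_def .
  have S: "SS N u = pa.S" unfolding SS_def pa.S_def by (simp add: a_def)
  have D: "DD N u = 2 * pa.S - 2 * pa.C1" using pa.Dform unfolding DD_def a_def .
  have X: "p3 * (6 * pa.S - 8 * pa.C1 + 2 * pa.C2) \<le> 0"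
    using pa.D2nonneg p3 by (simp add: mult_nonpos_nonneg)
  have Y: "p3 * (2 * pa.C2 - 2 * pa.S) \<ge> 0"
    using pa.C2bound p3 by (intro mult_nonpos_nonpos) auto
  show "Eu N p1 p2 p3 u \<le> (p1 + 4 * p2 + 9 * p3) * SS N u - (p2 + 6 * p3) * DD N u"
    using X unfolding E S D by (simp add: algebra_simps)
  show "Eu N p1 p2 p3 u \<ge> (p1 + 4 * p2 + 9 * p3) * SS N u - (p2 + 2 * p3) * DD N u"
    using Y unfolding E S D by (simp add: algebra_simps)
qed

lemma main_gen:
  assumes N: "N \<ge> 1" and p2: "p2 \<le> 0" and p3: "p3 \<le> 0"
  shows "\<exists>\<eta>. 2 \<le> \<eta> \<and> \<eta> \<le> 6 \<and>
           (stable3 N p1 p2 p3 \<longleftrightarrow>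
            (p1 + 4 * p2 + 9 * p3) - (1 / real N)\<^sup>2 * (mu_eps N)\<^sup>2 * (p2 + \<eta> * p3) > 0)"
proof -
  obtain \<Psi>0 where P0: "\<Psi>0 \<in> Uspace N - {\<lambda>_. 0}" and min: "\<forall>\<Psi> \<in> Uspace N - {\<lambda>_. 0}. gq N \<Psi>0 \<le> gq N \<Psi>"
    and mu: "mu_eps N = real N * sqrt (gq N \<Psi>0)"
    using mu_char[OF N] by blast
  define g0 where "g0 = gq N \<Psi>0"
  define A where "A = p1 + 4 * p2 + 9 * p3"
  have SSp: "\<And>u. u \<in> Uspace N - {\<lambda>_. 0} \<Longrightarrow> SS N u > 0" using SS_pos N by blast
  have DDn: "DD N u \<ge> 0" for u unfolding DD_def by (rule PS_nonneg) simp
  have g0n: "g0 \<ge> 0" unfolding g0_def gq_def using SSp[OF P0] DDn by simp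
  have m: "(1 / real N)\<^sup>2 * (mu_eps N)\<^sup>2 = g0"
    unfolding mu g0_def[symmetric] using N g0n by (simp add: power_mult_distrib power_divide)
  have Dge: "DD N u \<ge> g0 * SS N u" if "u \<in> Uspace N - {\<lambda>_. 0}" for u
  proof -
    have "g0 \<le> DD N u / SS N u" using min that unfolding g0_def gq_def by blast
    then show ?thesis using SSp[OF that] by (simp add: pos_le_divide_eq mult.commute)
  qed
  have D0: "DD N \<Psi>0 = g0 * SS N \<Psi>0"
    using SSp[OF P0] unfolding g0_def gq_def by simp
  have Np: "real N > 0" using N by simp
  show ?thesis
  proof (cases "stable3 N p1 p2 p3")
    case True
    have "A - g0 * (p2 + 6 * p3) > 0"
    proof (rule ccontr)
      assume c: "\<not> A - g0 * (p2 + 6 * p3) > 0"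
      have "Eu N p1 p2 p3 \<Psi>0 \<le> A * SS N \<Psi>0 - (p2 + 6 * p3) * DD N \<Psi>0"
        using per_u(1)[OF N _ p3, of \<Psi>0 p1 p2] P0 unfolding A_def by blast
      also have "\<dots> = (A - g0 * (p2 + 6 * p3)) * SS N \<Psi>0" unfolding D0 by (simp add: algebra_simps)
      also have "\<dots> \<le> 0" using c SSp[OF P0] by (simp add: mult_nonpos_nonneg)
      finally have "Eu N p1 p2 p3 \<Psi>0 \<le> 0" .
      moreover have "1 / real N * Eu N p1 p2 p3 \<Psi>0 > 0" using True P0 unfolding stable3_Eu by blast
      ultimately show False using Np by (simp add: zero_less_divide_iff)
    qed
    then show ?thesis using True unfolding m A_def by (intro exI[of _ 6]) auto
  next
    case False
    then obtain u where u: "u \<in> Uspace N - {\<lambda>_. 0}" and e: "\<not> 1 / real N * Eu N p1 p2 p3 u > 0"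
      unfolding stable3_Eu by blast
    have "\<not> A - g0 * (p2 + 2 * p3) > 0"
    proof
      assume c: "A - g0 * (p2 + 2 * p3) > 0"
      have "0 < (A - g0 * (p2 + 2 * p3)) * SS N u" using c SSp[OF u] by simp
      also have "\<dots> = A * SS N u - (p2 + 2 * p3) * (g0 * SS N u)" by (simp add: algebra_simps)
      also have "\<dots> \<le> A * SS N u - (p2 + 2 * p3) * DD N u"
        using Dge[OF u] p2 p3 by (simp add: mult_left_mono_neg)
      also have "\<dots> \<le> Eu N p1 p2 p3 u"
        using per_u(2)[OF N _ p3, of u p1 p2] u unfolding A_def by blast
      finally have "Eu N p1 p2 p3 u > 0" .
      then show False using e Np by simp
    qed
    then show ?thesis using False unfolding m A_def by (intro exI[of _ 2]) auto
  qed
qed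

theorem theorem5p1:
  fixes N :: nat and F :: real and \<phi> :: "real \<Rightarrow> real"
  assumes "N \<ge> 1"
    and "F > 0"
    and "\<forall>x>0. \<phi> differentiable (at x)"
    and "\<forall>x>0. deriv \<phi> differentiable (at x)"
    and "deriv (deriv \<phi>) (2 * F) \<le> 0"
    and "deriv (deriv \<phi>) (3 * F) \<le> 0"
    and "\<forall>k::nat. k \<ge> 4 \<longrightarrow> deriv (deriv \<phi>) (real k * F) = 0"
  shows "\<exists>\<eta>. 2 \<le> \<eta> \<and> \<eta> \<le> 6 \<and>
           (stable3 N (deriv (deriv \<phi>) F) (deriv (deriv \<phi>) (2 * F)) (deriv (deriv \<phi>) (3 * F))
            \<longleftrightarrow>
            (deriv (deriv \<phi>) F + 4 * deriv (deriv \<phi>) (2 * F) + 9 * deriv (deriv \<phi>) (3 * F))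
              - (1 / real N)\<^sup>2 * (mu_eps N)\<^sup>2
                * (deriv (deriv \<phi>) (2 * F) + \<eta> * deriv (deriv \<phi>) (3 * F)) > 0)"
  by (rule main_gen) (use assms in auto)

end
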